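(* Let $A\neq 1$ and $B\neq 0$ be real constants and consider $$x_{n+10}=\frac{x_n}{A+B\,x_nx_{n+2}x_{n+4}x_{n+6}x_{n+8}}.$$ The equilibrium point $\bar x=0$ is locally asymptotically stable when $|A|>1$. Moreover, for every $A\neq 1$, the nonzero equilibrium points (the real solutions of $A+B\bar x^5-1=0$) are non-hyperbolic.
   Context: An equilibrium $\bar x$ of $x_{n+10}=f(x_n,x_{n+2},\dots,x_{n+8})$ is hyperbolic if no root of the characteristic equation of the linearization of the equation at $\bar x$ has modulus $1$; otherwise it is non-hyperbolic. Local asymptotic stability refers to the standard notion for the equilibrium of this tenth-order recurrence. *)

theory Defs
  imports "HOL-Analysis.Analysis"
begin

text \<open>A tenth-order recurrence x(n+10) = f(x n, x(n+2), x(n+4), x(n+6), x(n+8)).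
  The map f takes its five arguments as a function u :: nat => real, where
  u k stands for x(n + 2k), k = 0..4.\<close>

definition is_solution10 :: "((nat \<Rightarrow> real) \<Rightarrow> real) \<Rightarrow> (nat \<Rightarrow> real) \<Rightarrow> bool" where
  "is_solution10 f x \<longleftrightarrow> (\<forall>n. x (n + 10) = f (\<lambda>k. x (n + 2 * k)))"

definition is_equilibrium10 :: "((nat \<Rightarrow> real) \<Rightarrow> real) \<Rightarrow> real \<Rightarrow> bool" where
  "is_equilibrium10 f xb \<longleftrightarrow> f (\<lambda>_. xb) = xb"

definition locally_stable10 :: "((nat \<Rightarrow> real) \<Rightarrow> real) \<Rightarrow> real \<Rightarrow> bool" where
  "locally_stable10 f xb \<longleftrightarrow>
     (\<forall>\<epsilon>>0. \<exists>\<delta>>0. \<forall>x. is_solution10 f x \<and> (\<forall>i<10. \<bar>x i - xb\<bar> < \<delta>)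
        \<longrightarrow> (\<forall>n. \<bar>x n - xb\<bar> < \<epsilon>))"

definition locally_asymptotically_stable10 :: "((nat \<Rightarrow> real) \<Rightarrow> real) \<Rightarrow> real \<Rightarrow> bool" where
  "locally_asymptotically_stable10 f xb \<longleftrightarrow>
     locally_stable10 f xb \<and>
     (\<exists>\<gamma>>0. \<forall>x. is_solution10 f x \<and> (\<forall>i<10. \<bar>x i - xb\<bar> < \<gamma>)
        \<longrightarrow> x \<longlonglongrightarrow> xb)"

definition partial10 :: "((nat \<Rightarrow> real) \<Rightarrow> real) \<Rightarrow> real \<Rightarrow> nat \<Rightarrow> real" where
  "partial10 f xb k = deriv (\<lambda>t. f ((\<lambda>_. xb)(k := t))) xb"

definition char_root10 :: "((nat \<Rightarrow> real) \<Rightarrow> real) \<Rightarrow> real \<Rightarrow> complex \<Rightarrow> bool" where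
  "char_root10 f xb z \<longleftrightarrow>
     z ^ 10 = (\<Sum>k<5. complex_of_real (partial10 f xb k) * z ^ (2 * k))"

definition hyperbolic10 :: "((nat \<Rightarrow> real) \<Rightarrow> real) \<Rightarrow> real \<Rightarrow> bool" where
  "hyperbolic10 f xb \<longleftrightarrow> (\<forall>z. char_root10 f xb z \<longrightarrow> cmod z \<noteq> 1)"

end

theory Submission
  imports Defs
begin

lemma stab_core:
  fixes A B c \<delta> :: real and x :: "nat \<Rightarrow> real"
  assumes sol: "\<And>n. x (n+10) = x n / (A + B * x n * x (n+2) * x (n+4) * x (n+6) * x (n+8))"
    and c: "c > 0" and hc: "\<bar>A\<bar> - \<bar>B\<bar> * \<delta>^5 \<ge> c" and init: "\<forall>i<10. \<bar>x i\<bar> < \<delta>"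
    and c1: "c \<ge> 1"
  shows "\<forall>n. \<bar>x n\<bar> < \<delta> \<and> \<bar>x (n+10)\<bar> \<le> \<bar>x n\<bar> / c"
proof -
  have d0: "\<delta> > 0" using init by (meson abs_ge_zero le_less_trans zero_less_numeral)
  have step: "\<bar>x (m+10)\<bar> \<le> \<bar>x m\<bar> / c" if h: "\<And>j. j < m + 10 \<Longrightarrow> \<bar>x j\<bar> < \<delta>" for m
  proof -
    let ?P = "x m * x (m+2) * x (m+4) * x (m+6) * x (m+8)"
    have "\<bar>?P\<bar> = \<bar>x m\<bar> * \<bar>x (m+2)\<bar> * \<bar>x (m+4)\<bar> * \<bar>x (m+6)\<bar> * \<bar>x (m+8)\<bar>"
      by (simp add: abs_mult)
    also have "\<dots> \<le> \<delta>*\<delta>*\<delta>*\<delta>*\<delta>"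
      using h[of m] h[of "m+2"] h[of "m+4"] h[of "m+6"] h[of "m+8"]
      by (intro mult_mono) auto
    finally have P: "\<bar>?P\<bar> \<le> \<delta>^5" by (simp add: eval_nat_numeral)
    have "\<bar>B * ?P\<bar> \<le> \<bar>B\<bar> * \<delta>^5" using P by (simp add: abs_mult mult_left_mono)
    hence D: "\<bar>A + B * ?P\<bar> \<ge> c" using hc by linarith
    have "x (m+10) = x m / (A + B * ?P)" using sol[of m] by (simp add: mult.assoc)
    hence "\<bar>x (m+10)\<bar> = \<bar>x m\<bar> / \<bar>A + B * ?P\<bar>" by (simp add: abs_divide)
    also have "\<dots> \<le> \<bar>x m\<bar> / c" using D c by (intro divide_left_mono) auto
    finally show ?thesis .
  qed
  have bnd: "\<bar>x n\<bar> < \<delta>" for n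
  proof (induction n rule: less_induct)
    case (less n)
    show ?case
    proof (cases "n < 10")
      case True then show ?thesis using init by auto
    next
      case False
      then obtain m where m: "n = m + 10" by (metis add.commute le_Suc_ex not_less)
      have "\<bar>x n\<bar> \<le> \<bar>x m\<bar> / c" using step[of m] less m by auto
      also have "\<dots> \<le> \<bar>x m\<bar>" using c1 by (simp add: divide_le_eq mult_le_cancel_left1 abs_ge_zero)
      also have "\<dots> < \<delta>" using less m by auto
      finally show ?thesis .
    qed
  qed
  show ?thesis using bnd step by auto
qed

lemma conv_core:
  fixes c \<delta> :: real and x :: "nat \<Rightarrow> real"
  assumes "\<forall>n. \<bar>x n\<bar> < \<delta> \<and> \<bar>x (n+10)\<bar> \<le> \<bar>x n\<bar> / c" and c: "c > 1"
  shows "x \<longlonglongrightarrow> 0"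
proof -
  have k: "\<bar>x (10*k + r)\<bar> \<le> \<delta> * (1/c)^k" for k r
  proof (induction k)
    case 0 then show ?case using assms(1) by (simp add: less_imp_le)
  next
    case (Suc k)
    have "\<bar>x (10*Suc k + r)\<bar> = \<bar>x ((10*k + r) + 10)\<bar>" by (simp add: algebra_simps)
    also have "\<dots> \<le> \<bar>x (10*k + r)\<bar> / c" using assms(1) by blast
    also have "\<dots> \<le> \<delta> * (1/c)^k / c" using Suc c by (simp add: divide_right_mono)
    finally show ?case by (simp add: field_simps)
  qed
  have d0: "\<delta> > 0" using assms(1) by (meson abs_ge_zero le_less_trans)
  show ?thesis
  proof (rule LIMSEQ_I)
    fix r :: real assume r: "r > 0"
    obtain k where kk: "(1/c)^k < r/\<delta>" using real_arch_pow_inv[of "r/\<delta>" "1/c"] r d0 c by auto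
    show "\<exists>no. \<forall>n\<ge>no. norm (x n - 0) < r"
    proof (intro exI allI impI)
      fix n assume n: "n \<ge> 10*k"
      have e: "n = 10*(n div 10) + n mod 10" by simp
      have "\<bar>x n\<bar> \<le> \<delta> * (1/c)^(n div 10)" using k[of "n div 10" "n mod 10"] e by metis
      also have "\<dots> \<le> \<delta> * (1/c)^k" using n c d0
        by (intro mult_left_mono power_decreasing) auto
      also have "\<dots> < r" using kk d0 by (simp add: field_simps)
      finally show "norm (x n - 0) < r" by simp
    qed
  qed
qed


lemma partials:
  fixes A B xb :: real
  assumes e: "A + B * xb^5 = 1"
  defines "f \<equiv> (\<lambda>u::nat \<Rightarrow> real. u 0 / (A + B * u 0 * u 1 * u 2 * u 3 * u 4))"
  shows "partial10 f xb 0 = A" "partial10 f xb 1 = A - 1" "partial10 f xb 2 = A - 1"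
        "partial10 f xb 3 = A - 1" "partial10 f xb 4 = A - 1"
proof -
  have e': "A + B*xb*xb*xb*xb*xb = 1" using e by (simp add: eval_nat_numeral algebra_simps)
  have "((\<lambda>t. t / (A + B*t*xb*xb*xb*xb)) has_field_derivative A) (at xb)"
    by (rule derivative_eq_intros refl | simp add: e')+
      (use e e' in \<open>simp add: eval_nat_numeral algebra_simps\<close>)
  then show "partial10 f xb 0 = A" unfolding partial10_def f_def by (simp add: DERIV_imp_deriv)
  have "((\<lambda>t. xb / (A + B*xb*t*xb*xb*xb)) has_field_derivative A - 1) (at xb)"
    by (rule derivative_eq_intros refl | simp add: e')+
      (use e e' in \<open>simp add: eval_nat_numeral algebra_simps\<close>)
  then show "partial10 f xb 1 = A - 1" unfolding partial10_def f_def by (simp add: DERIV_imp_deriv)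
  have "((\<lambda>t. xb / (A + B*xb*xb*t*xb*xb)) has_field_derivative A - 1) (at xb)"
    by (rule derivative_eq_intros refl | simp add: e')+
      (use e e' in \<open>simp add: eval_nat_numeral algebra_simps\<close>)
  then show "partial10 f xb 2 = A - 1" unfolding partial10_def f_def by (simp add: DERIV_imp_deriv)
  have "((\<lambda>t. xb / (A + B*xb*xb*xb*t*xb)) has_field_derivative A - 1) (at xb)"
    by (rule derivative_eq_intros refl | simp add: e')+
      (use e e' in \<open>simp add: eval_nat_numeral algebra_simps\<close>)
  then show "partial10 f xb 3 = A - 1" unfolding partial10_def f_def by (simp add: DERIV_imp_deriv)
  have "((\<lambda>t. xb / (A + B*xb*xb*xb*xb*t)) has_field_derivative A - 1) (at xb)"
    by (rule derivative_eq_intros refl | simp add: e')+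
      (use e e' in \<open>simp add: eval_nat_numeral algebra_simps\<close>)
  then show "partial10 f xb 4 = A - 1" unfolding partial10_def f_def by (simp add: DERIV_imp_deriv)
qed


lemma charsum: fixes p :: "nat \<Rightarrow> real" and z :: complex
  assumes P: "p 0 = A" "p 1 = A - 1" "p 2 = A - 1" "p 3 = A - 1" "p 4 = A - 1"
  and z: "z^10 = complex_of_real A + complex_of_real (A-1) * (z^2 + z^4 + z^6 + z^8)"
  shows "z ^ 10 = (\<Sum>k<5. complex_of_real (p k) * z ^ (2 * k))"
proof -
  have s: "{..<5::nat} = {0,1,2,3,4}" by auto
  have "(\<Sum>k<5. complex_of_real (p k) * z ^ (2 * k)) =
     of_real (p 0) * z^0 + of_real (p 1) * z^2 + of_real (p 2) * z^4 + of_real (p 3) * z^6 + of_real (p 4) * z^8"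
    unfolding s by simp
  also have "\<dots> = complex_of_real A + complex_of_real (A-1) * (z^2 + z^4 + z^6 + z^8)" unfolding P by (simp add: algebra_simps)
  finally show ?thesis using z by simp
qed

lemma root_exists:
  fixes A :: real
  shows "\<exists>z::complex. cmod z = 1 \<and> z^10 = A + (A-1) * (z^2 + z^4 + z^6 + z^8)"
proof -
  define z where "z = cis (pi/5)"
  define w where "w = z^2"
  have "z^10 = cis (real 10 * (pi/5))" unfolding z_def by (rule Complex.DeMoivre)
  hence z10: "z^10 = 1" by simp
  have w5: "w^5 = 1" using z10 unfolding w_def by (simp add: power_mult[symmetric])
  have "w = cis (real 2 * (pi/5))" unfolding w_def z_def by (rule Complex.DeMoivre)
  hence "Im w = sin (2*pi/5)" by simp
  moreover have "sin (2*pi/5) > 0" by (rule sin_gt_zero) auto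
  ultimately have w1: "w \<noteq> 1" by auto
  have "(w - 1) * (1 + w + w^2 + w^3 + w^4) = w^5 - 1" by (simp add: algebra_simps eval_nat_numeral)
  hence s0: "1 + w + w^2 + w^3 + w^4 = 0" using w5 w1 by simp
  have "z^2 + z^4 + z^6 + z^8 = w + w^2 + w^3 + w^4" unfolding w_def by (simp add: power_mult[symmetric])
  also have "\<dots> = -1" using s0 by (simp add: algebra_simps add_eq_0_iff)
  finally have "z^10 = A + (A-1) * (z^2 + z^4 + z^6 + z^8)" using z10 by simp
  moreover have "cmod z = 1" unfolding z_def by simp
  ultimately show ?thesis by blast
qed

theorem theorem6:
  fixes A B :: real
  assumes "A \<noteq> 1" and "B \<noteq> 0"
  defines "f \<equiv> (\<lambda>u::nat \<Rightarrow> real. u 0 / (A + B * u 0 * u 1 * u 2 * u 3 * u 4))"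
  shows "(\<bar>A\<bar> > 1 \<longrightarrow> locally_asymptotically_stable10 f 0)
       \<and> (\<forall>xb. (xb \<noteq> 0 \<and> is_equilibrium10 f xb) \<longleftrightarrow> A + B * xb ^ 5 - 1 = 0)
       \<and> (\<forall>xb. xb \<noteq> 0 \<and> is_equilibrium10 f xb \<longrightarrow> \<not> hyperbolic10 f xb)"
proof -
  have eq: "(xb \<noteq> 0 \<and> is_equilibrium10 f xb) \<longleftrightarrow> A + B * xb ^ 5 - 1 = 0" for xb
  proof -
    have p: "A + B*xb*xb*xb*xb*xb = A + B * xb^5" by (simp add: eval_nat_numeral algebra_simps)
    show ?thesis
    proof
      assume h: "xb \<noteq> 0 \<and> is_equilibrium10 f xb"
      hence "xb / (A + B * xb^5) = xb" unfolding is_equilibrium10_def f_def using p by simp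
      hence "A + B * xb^5 = 1" using h
      proof -
        assume q: "xb / (A + B * xb^5) = xb" "xb \<noteq> 0 \<and> is_equilibrium10 f xb"
        have "A + B * xb^5 \<noteq> 0" using q by auto
        hence "xb = xb * (A + B * xb^5)" using q(1) by (simp add: divide_eq_eq)
        thus ?thesis using q(2) by simp
      qed
      then show "A + B * xb ^ 5 - 1 = 0" by simp
    next
      assume h: "A + B * xb ^ 5 - 1 = 0"
      hence "xb \<noteq> 0" using assms(1) by auto
      moreover have "f (\<lambda>_. xb) = xb / (A + B * xb^5)" unfolding f_def using p by simp
      ultimately show "xb \<noteq> 0 \<and> is_equilibrium10 f xb" unfolding is_equilibrium10_def using h by simp
    qed
  qed
  have nh: "\<not> hyperbolic10 f xb" if h: "xb \<noteq> 0 \<and> is_equilibrium10 f xb" for xb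
  proof -
    have e: "A + B * xb^5 = 1" using eq h by simp
    note P = partials[OF e, folded f_def]
    obtain z :: complex where z: "cmod z = 1" "z^10 = A + (A-1) * (z^2 + z^4 + z^6 + z^8)"
      using root_exists by blast
    have "char_root10 f xb z" unfolding char_root10_def
      by (rule charsum[OF P z(2)])
    then show ?thesis unfolding hyperbolic10_def using z(1) by blast
  qed
  have las: "locally_asymptotically_stable10 f 0" if A1: "\<bar>A\<bar> > 1"
  proof -
    define c where "c = (\<bar>A\<bar> + 1) / 2"
    define d0 where "d0 = min 1 ((\<bar>A\<bar> - 1) / (2 * \<bar>B\<bar> + 2))"
    have c1: "c > 1" using A1 unfolding c_def by simp
    have d0p: "d0 > 0" using A1 unfolding d0_def by (simp add: abs_ge_zero add_pos_nonneg)
    have key: "\<forall>n. \<bar>x n\<bar> < \<delta> \<and> \<bar>x (n+10)\<bar> \<le> \<bar>x n\<bar> / c"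
      if sol: "is_solution10 f x" and dd: "\<delta> \<le> d0" and init: "\<forall>i<10. \<bar>x i - 0\<bar> < \<delta>" for x \<delta>
    proof (rule stab_core[where A=A and B=B])
      show "x (n+10) = x n / (A + B * x n * x (n+2) * x (n+4) * x (n+6) * x (n+8))" for n
        using sol unfolding is_solution10_def f_def by (simp add: eval_nat_numeral)
      show "0 < c" "1 \<le> c" using c1 by auto
      show "\<forall>i<10. \<bar>x i\<bar> < \<delta>" using init by simp
      have dp: "0 \<le> \<delta>" using init by (metis abs_ge_zero diff_zero less_imp_le order.strict_trans1 zero_less_numeral)
      have "\<delta>^5 \<le> \<delta>" using dp dd unfolding d0_def using power_decreasing[of 1 5 \<delta>] by simp
      have "\<bar>B\<bar> * \<delta>^5 \<le> \<bar>B\<bar> * \<delta>" using \<open>\<delta>^5 \<le> \<delta>\<close> by (simp add: mult_left_mono)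
      also have "\<dots> \<le> \<bar>B\<bar> * ((\<bar>A\<bar> - 1) / (2 * \<bar>B\<bar> + 2))" using dd unfolding d0_def
        by (intro mult_left_mono) auto
      also have "\<dots> \<le> (\<bar>A\<bar> - 1) / 2" using A1 by (simp add: field_simps)
      finally show "c \<le> \<bar>A\<bar> - \<bar>B\<bar> * \<delta>^5" unfolding c_def by simp
    qed
    show ?thesis unfolding locally_asymptotically_stable10_def locally_stable10_def
    proof (intro conjI allI impI)
      fix \<epsilon> :: real assume ep: "\<epsilon> > 0"
      show "\<exists>\<delta>>0. \<forall>x. is_solution10 f x \<and> (\<forall>i<10. \<bar>x i - 0\<bar> < \<delta>) \<longrightarrow> (\<forall>n. \<bar>x n - 0\<bar> < \<epsilon>)"
      proof (intro exI[of _ "min d0 \<epsilon>"] conjI allI impI)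
        show "0 < min d0 \<epsilon>" using ep d0p by simp
        fix x n assume H: "is_solution10 f x \<and> (\<forall>i<10. \<bar>x i - 0\<bar> < min d0 \<epsilon>)"
        have "min d0 \<epsilon> \<le> d0" by simp
        then have "\<forall>n. \<bar>x n\<bar> < min d0 \<epsilon> \<and> \<bar>x (n+10)\<bar> \<le> \<bar>x n\<bar> / c" using key[of x "min d0 \<epsilon>"] H by blast
        then show "\<bar>x n - 0\<bar> < \<epsilon>" by force
      qed
    next
      show "\<exists>\<gamma>>0. \<forall>x. is_solution10 f x \<and> (\<forall>i<10. \<bar>x i - 0\<bar> < \<gamma>) \<longrightarrow> x \<longlonglongrightarrow> 0"
      proof (intro exI[of _ d0] conjI allI impI)
        show "0 < d0" by (rule d0p)
        fix x assume "is_solution10 f x \<and> (\<forall>i<10. \<bar>x i - 0\<bar> < d0)"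
        then show "x \<longlonglongrightarrow> 0" using key[of x d0] conv_core c1 by blast
      qed
    qed
  qed
  show ?thesis using eq nh las by blast
qed

end
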